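(* Let $F\colon\mathbb{R}^p\to\mathbb{R}$ be a linear ReLU network with skip connections. Then $\partial^cF(0)=\{0\}$ if and only if $F$ is constant.
   Context: A linear ReLU network with skip connections is $F(x)=M_L\Phi_{L-1}(M_{L-1}\Phi_{L-2}(\cdots\Phi_1(M_1x)))$ with real matrices $M_1\in\mathbb{R}^{p_1\times p}$, $M_i\in\mathbb{R}^{p_i\times p_{i-1}}$, $M_L\in\mathbb{R}^{1\times p_{L-1}}$, each $\Phi_i$ acting coordinatewise as either the identity or $\mathrm{ReLU}(t)=\max(0,t)$ on each coordinate. The Clarke subdifferential is $\partial^cF(x)=\mathrm{conv}\{\lim_k\nabla F(x_k):x_k\to x,\ x_k\in\mathrm{diff}_F\}$, $\mathrm{diff}_F$ being the set of differentiability points of $F$. *)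

theory Defs
  imports "HOL-Analysis.Analysis"
begin

definition act :: "(nat \<Rightarrow> bool) \<Rightarrow> (nat \<Rightarrow> real) \<Rightarrow> (nat \<Rightarrow> real)" where
  "act A v = (\<lambda>i. if A i then max 0 (v i) else v i)"

text \<open>Layers after the first: each entry (Phi_k, M_(k+1), p_k) applies the activation
  Phi_k to the current p_k-dimensional hidden vector and then the matrix M_(k+1)
  (only columns j < p_k are used).\<close>
fun net_eval :: "((nat \<Rightarrow> bool) \<times> (nat \<Rightarrow> nat \<Rightarrow> real) \<times> nat) list \<Rightarrow> (nat \<Rightarrow> real) \<Rightarrow> (nat \<Rightarrow> real)" where
  "net_eval [] h = h"
| "net_eval ((A, M, n) # rest) h = net_eval rest (\<lambda>i. \<Sum>j<n. M i j * act A h j)"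

text \<open>F(x) = M_L Phi_(L-1)(... Phi_1(M_1 x)); row i of M_1 is the vector M1 i,
  and the scalar output is coordinate 0 of the last layer.\<close>
definition linear_relu_net :: "(real^'n \<Rightarrow> real) \<Rightarrow> bool" where
  "linear_relu_net F \<longleftrightarrow>
     (\<exists>(M1 :: nat \<Rightarrow> real^'n) layers.
        F = (\<lambda>x. net_eval layers (\<lambda>i. M1 i \<bullet> x) 0))"

definition diff_points :: "(real^'n \<Rightarrow> real) \<Rightarrow> (real^'n) set" where
  "diff_points F = {x. F differentiable (at x)}"

definition clarke_subdiff :: "(real^'n \<Rightarrow> real) \<Rightarrow> real^'n \<Rightarrow> (real^'n) set" where
  "clarke_subdiff F x = convex hull
     {g. \<exists>X G. (\<forall>k. X k \<in> diff_points F \<and> (F has_derivative (\<lambda>h. G k \<bullet> h)) (at (X k)))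
               \<and> X \<longlonglongrightarrow> x \<and> G \<longlonglongrightarrow> g}"

end

theory Submission
  imports Defs
begin

definition affon :: "(real^'n) set \<Rightarrow> (real^'n \<Rightarrow> real) \<Rightarrow> bool" where
  "affon W f \<longleftrightarrow> (\<exists>c a. \<forall>y\<in>W. f y = c + a \<bullet> y)"

lemma affon_subset: "affon W f \<Longrightarrow> V \<subseteq> W \<Longrightarrow> affon V f"
  unfolding affon_def by blast

lemma affon_sum:
  assumes "finite S"
  shows "(\<forall>j\<in>S. affon W (f j)) \<Longrightarrow> affon W (\<lambda>y. \<Sum>j\<in>S. m j * f j y)"
  using assms
proof (induction S rule: finite_induct)
  case empty
  show ?case unfolding affon_def by (rule exI[of _ 0], rule exI[of _ 0]) simp
next
  case (insert x S)
  then obtain c a where ca: "\<forall>y\<in>W. (\<Sum>j\<in>S. m j * f j y) = c + a \<bullet> y"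
    unfolding affon_def by auto
  from insert obtain c' a' where ca': "\<forall>y\<in>W. f x y = c' + a' \<bullet> y"
    unfolding affon_def by auto
  show ?case unfolding affon_def
  proof (intro exI ballI)
    fix y assume "y \<in> W"
    then show "(\<Sum>j\<in>insert x S. m j * f j y) = (m x * c' + c) + (m x *\<^sub>R a' + a) \<bullet> y"
      using ca ca' insert(1,2) by (simp add: inner_add_left algebra_simps)
  qed
qed

lemma refine1:
  fixes f :: "real^'n \<Rightarrow> real"
  assumes "open W" "W \<noteq> {}" "continuous_on UNIV f"
  shows "\<exists>W'. open W' \<and> W' \<noteq> {} \<and> W' \<subseteq> W \<and>
     ((\<forall>y\<in>W'. max 0 (f y) = f y) \<or> (\<forall>y\<in>W'. max 0 (f y) = 0))"
proof (cases "\<exists>y\<in>W. f y > 0")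
  case True
  have "open {y. 0 < f y}" using open_Collect_less[of "\<lambda>_. (0::real)" f] assms(3) by simp
  then show ?thesis using True assms
    by (intro exI[of _ "W \<inter> {y. 0 < f y}"]) auto
next
  case False
  show ?thesis
  proof (cases "\<exists>y\<in>W. f y < 0")
    case True
    have "open {y. f y < 0}" using open_Collect_less[of f "\<lambda>_. (0::real)"] assms(3) by simp
    then show ?thesis using True assms
      by (intro exI[of _ "W \<inter> {y. f y < 0}"]) auto
  next
    case False2: False
    show ?thesis using False False2 assms
      by (intro exI[of _ W]) (auto simp: not_less max_def)
  qed
qed

lemma refine_n:
  assumes "open W" "W \<noteq> {}" "\<forall>j. continuous_on UNIV (\<lambda>x. H x j)"
  shows "\<forall>j<n. affon W (\<lambda>x. H x j) \<Longrightarrow>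
    \<exists>W'. open W' \<and> W' \<noteq> {} \<and> W' \<subseteq> W \<and> (\<forall>j<n. affon W' (\<lambda>x. act A (H x) j))"
proof (induction n)
  case 0
  then show ?case using assms by auto
next
  case (Suc n)
  then obtain W1 where W1: "open W1" "W1 \<noteq> {}" "W1 \<subseteq> W" "\<forall>j<n. affon W1 (\<lambda>x. act A (H x) j)"
    by auto
  obtain W2 where W2: "open W2" "W2 \<noteq> {}" "W2 \<subseteq> W1"
     "(\<forall>y\<in>W2. max 0 (H y n) = H y n) \<or> (\<forall>y\<in>W2. max 0 (H y n) = 0)"
    using refine1[OF W1(1,2), of "\<lambda>x. H x n"] assms(3) by auto
  have affn: "affon W2 (\<lambda>x. H x n)"
    using Suc.prems W1(3) W2(3) affon_subset by (metis lessI order_trans)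
  have "affon W2 (\<lambda>x. act A (H x) n)"
  proof (cases "A n")
    case False
    then show ?thesis using affn by (simp add: act_def)
  next
    case True
    from W2(4) show ?thesis
    proof
      assume "\<forall>y\<in>W2. max 0 (H y n) = H y n"
      then show ?thesis using affn True unfolding affon_def act_def by auto
    next
      assume "\<forall>y\<in>W2. max 0 (H y n) = 0"
      then show ?thesis using True unfolding affon_def act_def
        by (intro exI[of _ 0]) auto
    qed
  qed
  moreover have "\<forall>j<n. affon W2 (\<lambda>x. act A (H x) j)"
    using W1(4) W2(3) affon_subset by blast
  ultimately show ?case using W2 W1(3)
    by (intro exI[of _ W2]) (auto simp: less_Suc_eq)
qed

definition good :: "(real^'n \<Rightarrow> nat \<Rightarrow> real) \<Rightarrow> bool" where
  "good H \<longleftrightarrow> (\<forall>j. continuous_on UNIV (\<lambda>x. H x j)) \<and>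
     (\<forall>J V. finite J \<longrightarrow> open V \<longrightarrow> V \<noteq> {} \<longrightarrow>
        (\<exists>W. open W \<and> W \<noteq> {} \<and> W \<subseteq> V \<and> (\<forall>j\<in>J. affon W (\<lambda>x. H x j))))"

lemma good_step:
  assumes "good H"
  shows "good (\<lambda>x i. \<Sum>j<n. M i j * act A (H x) j)"
proof -
  have cont: "continuous_on UNIV (\<lambda>x. H x j)" for j using assms unfolding good_def by auto
  have cact: "continuous_on UNIV (\<lambda>x. act A (H x) j)" for j
    by (cases "A j") (auto simp: act_def intro!: continuous_intros cont)
  have c: "\<forall>i. continuous_on UNIV (\<lambda>x. \<Sum>j<n. M i j * act A (H x) j)"
    by (auto intro!: continuous_intros cact)
  have "\<exists>W. open W \<and> W \<noteq> {} \<and> W \<subseteq> V \<and> (\<forall>i\<in>J. affon W (\<lambda>x. \<Sum>j<n. M i j * act A (H x) j))"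
    if fJ: "finite J" and oV: "open V" and nV: "V \<noteq> {}" for J V
  proof -
    obtain W where W: "open W" "W \<noteq> {}" "W \<subseteq> V" "\<forall>j\<in>{..<n}. affon W (\<lambda>x. H x j)"
      using conjunct2[OF assms[unfolded good_def], rule_format, OF finite_lessThan oV nV] by blast
    obtain W' where W': "open W'" "W' \<noteq> {}" "W' \<subseteq> W" "\<forall>j<n. affon W' (\<lambda>x. act A (H x) j)"
      using refine_n[OF W(1,2), of H n A] W(4) cont by auto
    show ?thesis using W' W(3)
      by (intro exI[of _ W']) (auto intro!: affon_sum)
  qed
  then show ?thesis using c unfolding good_def by blast
qed

lemma good_net: "good H \<Longrightarrow> good (\<lambda>x. net_eval layers (H x))"
proof (induction layers arbitrary: H)
  case Nil
  then show ?case by simp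
next
  case (Cons l rest)
  obtain A M n where l: "l = (A, M, n)" by (cases l)
  have "good (\<lambda>x i. \<Sum>j<n. M i j * act A (H x) j)" using good_step Cons.prems by blast
  from Cons.IH[OF this] show ?case using l by simp
qed

lemma good_base: "good (\<lambda>(x::real^'n) i. M1 i \<bullet> x)"
  unfolding good_def
proof (intro conjI allI impI)
  fix j show "continuous_on UNIV (\<lambda>x::real^'n. M1 j \<bullet> x)" by (intro continuous_intros)
next
  fix J and V :: "(real^'n) set" assume "open V" "V \<noteq> {}"
  moreover have "affon V (\<lambda>x. M1 j \<bullet> x)" for j
    unfolding affon_def by (rule exI[of _ 0], rule exI[of _ "M1 j"]) simp
  ultimately show "\<exists>W. open W \<and> W \<noteq> {} \<and> W \<subseteq> V \<and> (\<forall>j\<in>J. affon W (\<lambda>x. M1 j \<bullet> x))"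
    by blast
qed

lemma act_scale: "t \<ge> 0 \<Longrightarrow> act A (\<lambda>i. t * h i) = (\<lambda>i. t * act A h i)"
  unfolding act_def by (auto simp: max_mult_distrib_left)

lemma net_scale: "t \<ge> 0 \<Longrightarrow> net_eval layers (\<lambda>i. t * h i) = (\<lambda>i. t * net_eval layers h i)"
proof (induction layers arbitrary: h)
  case Nil
  then show ?case by simp
next
  case (Cons l rest)
  obtain A M n where l: "l = (A, M, n)" by (cases l)
  have "(\<lambda>i. \<Sum>j<n. M i j * act A (\<lambda>i. t * h i) j) = (\<lambda>i. t * (\<Sum>j<n. M i j * act A h j))"
    using Cons.prems by (simp add: act_scale sum_distrib_left mult.left_commute)
  then show ?case using l Cons by simp
qed

theorem lemmaD4:
  fixes F :: "real^'n \<Rightarrow> real"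
  assumes "linear_relu_net F"
  shows "clarke_subdiff F 0 = {0} \<longleftrightarrow> (\<exists>c. \<forall>x. F x = c)"
proof
  assume "\<exists>c. \<forall>x. F x = c"
  then obtain c where Fc: "F = (\<lambda>x. c)" by auto
  let ?S = "{g. \<exists>X G. (\<forall>k. X k \<in> diff_points F \<and> (F has_derivative (\<lambda>h. G k \<bullet> h)) (at (X k)))
               \<and> X \<longlonglongrightarrow> 0 \<and> G \<longlonglongrightarrow> g}"
  have "?S = {0}"
  proof
    show "?S \<subseteq> {0}"
    proof
      fix g assume "g \<in> ?S"
      then obtain X G where XG: "\<forall>k. (F has_derivative (\<lambda>h. G k \<bullet> h)) (at (X k))" "G \<longlonglongrightarrow> g"
        by auto
      have "G k = 0" for k
      proof -
        have "(F has_derivative (\<lambda>h. 0)) (at (X k))" using Fc by simp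
        from has_derivative_unique[OF XG(1)[rule_format, of k] this]
        have "G k \<bullet> G k = 0" by meson
        then show ?thesis by simp
      qed
      then have "G = (\<lambda>k. 0)" by auto
      with XG(2) have "g = 0" using LIMSEQ_unique tendsto_const by metis
      then show "g \<in> {0}" by simp
    qed
  next
    have "(F has_derivative (\<lambda>h. (0::real^'n) \<bullet> h)) (at 0)" unfolding Fc inner_zero_left by simp
    note d = this
    have "0 \<in> ?S"
    proof (intro CollectI exI[of _ "\<lambda>k::nat. 0::real^'n"] exI[of _ "\<lambda>k::nat. 0::real^'n"] conjI allI)
      fix k
      show "(\<lambda>k. 0) k \<in> diff_points F" using d by (auto simp: diff_points_def differentiable_def)
      show "(F has_derivative (\<lambda>h. (\<lambda>k. 0) k \<bullet> h)) (at ((\<lambda>k. 0) k))" by (rule d)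
    qed auto
    then show "{0} \<subseteq> ?S" by simp
  qed
  then show "clarke_subdiff F 0 = {0}" unfolding clarke_subdiff_def by simp
next
  assume C: "clarke_subdiff F 0 = {0}"
  obtain M1 :: "nat \<Rightarrow> real^'n" and layers where
    Fdef: "F = (\<lambda>x. net_eval layers (\<lambda>i. M1 i \<bullet> x) 0)"
    using assms unfolding linear_relu_net_def by auto
  have hom: "F (t *\<^sub>R x) = t * F x" if "t \<ge> 0" for t x
  proof -
    have "(\<lambda>i. M1 i \<bullet> (t *\<^sub>R x)) = (\<lambda>i. t * (M1 i \<bullet> x))" by simp
    then show ?thesis using net_scale[OF that] Fdef by simp
  qed
  have gd: "good (\<lambda>x. net_eval layers (\<lambda>i. M1 i \<bullet> x))"
    using good_net[OF good_base[of M1], of layers] by simp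
  have contF: "continuous_on UNIV F" using gd unfolding good_def Fdef by simp
  have deriv0: "a = 0" if da: "(F has_derivative (\<lambda>h. a \<bullet> h)) (at x)" for x a
  proof -
    define X where "X k = (1 / real (Suc k)) *\<^sub>R x" for k
    have dX: "(F has_derivative (\<lambda>h. a \<bullet> h)) (at (X k))" for k
    proof -
      define s where "s = real (Suc k)"
      have s: "s > 0" unfolding s_def by simp
      have Feq: "F = (\<lambda>y. (1/s) * F (s *\<^sub>R y))"
      proof (rule ext)
        fix y
        have "F (s *\<^sub>R y) = s * F y" using hom s by simp
        then show "F y = (1/s) * F (s *\<^sub>R y)" using s by simp
      qed
      have sX: "s *\<^sub>R X k = x" unfolding X_def s_def by simp
      have d1: "((\<lambda>y. s *\<^sub>R y) has_derivative (\<lambda>h. s *\<^sub>R h)) (at (X k))"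
        by (rule bounded_linear.has_derivative[OF bounded_linear_scaleR_right has_derivative_ident])
      have d2: "(F has_derivative (\<lambda>h. a \<bullet> h)) (at ((\<lambda>y. s *\<^sub>R y) (X k)))"
        using da sX by simp
      have "((F \<circ> (\<lambda>y. s *\<^sub>R y)) has_derivative ((\<lambda>h. a \<bullet> h) \<circ> (\<lambda>h. s *\<^sub>R h))) (at (X k))"
        by (rule diff_chain_at[OF d1 d2])
      then have "((\<lambda>y. (1/s) * F (s *\<^sub>R y)) has_derivative (\<lambda>h. (1/s) * (a \<bullet> (s *\<^sub>R h)))) (at (X k))"
        unfolding o_def by (rule has_derivative_mult_right)
      moreover have "(\<lambda>h. (1/s) * (a \<bullet> (s *\<^sub>R h))) = (\<lambda>h. a \<bullet> h)" using s by auto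
      ultimately show ?thesis using Feq by metis
    qed
    have "(\<lambda>k. 1 / real (Suc k)) \<longlonglongrightarrow> 0"
      using LIMSEQ_Suc[OF lim_1_over_n] by simp
    then have "X \<longlonglongrightarrow> 0" unfolding X_def
      using tendsto_scaleR[OF _ tendsto_const, of _ 0 sequentially x] by simp
    then have "a \<in> {g. \<exists>X G. (\<forall>k. X k \<in> diff_points F \<and> (F has_derivative (\<lambda>h. G k \<bullet> h)) (at (X k)))
               \<and> X \<longlonglongrightarrow> 0 \<and> G \<longlonglongrightarrow> g}"
      using dX unfolding diff_points_def differentiable_def
      by (intro CollectI exI[of _ X] exI[of _ "\<lambda>k. a"]) auto
    then have "a \<in> clarke_subdiff F 0" unfolding clarke_subdiff_def by (rule hull_inc)
    then show ?thesis using C by simp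
  qed
  have zero: "F x = 0" if da: "(F has_derivative (\<lambda>h. a \<bullet> h)) (at x)" for x a
  proof -
    have a0: "a = 0" using deriv0 da .
    have d1: "((\<lambda>t::real. t *\<^sub>R x) has_derivative (\<lambda>t. t *\<^sub>R x)) (at 1)"
      by (rule bounded_linear.has_derivative[OF bounded_linear_scaleR_left has_derivative_ident])
    have "((F \<circ> (\<lambda>t::real. t *\<^sub>R x)) has_derivative ((\<lambda>h. a \<bullet> h) \<circ> (\<lambda>t. t *\<^sub>R x))) (at 1)"
      by (rule diff_chain_at[OF d1]) (simp add: da)
    then have "((\<lambda>t. F (t *\<^sub>R x)) has_derivative (\<lambda>t. 0)) (at 1)"
      using a0 by (simp add: o_def)
    then have "((\<lambda>t. t * F x) has_derivative (\<lambda>t. 0)) (at 1)"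
      by (rule has_derivative_transform_within_open[where s="{0<..}"]) (auto simp: hom)
    moreover have "((\<lambda>t. t * F x) has_derivative (\<lambda>t. t * F x)) (at 1)"
      by (auto intro!: derivative_eq_intros)
    ultimately have "(\<lambda>t::real. 0) = (\<lambda>t. t * F x)" by (rule has_derivative_unique)
    then have "(\<lambda>t::real. 0) 1 = (\<lambda>t. t * F x) 1" by (rule arg_cong)
    then show ?thesis by simp
  qed
  have dense: "\<exists>y\<in>{x. F x = 0}. dist y z < e" if "e > 0" for z e
  proof -
    have "\<exists>W. open W \<and> W \<noteq> {} \<and> W \<subseteq> ball z e \<and> (\<forall>j\<in>{0}. affon W (\<lambda>x. net_eval layers (\<lambda>i. M1 i \<bullet> x) j))"
      using conjunct2[OF gd[unfolded good_def], rule_format, of "{0}" "ball z e"] that by auto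
    then obtain W where W: "open W" "W \<noteq> {}" "W \<subseteq> ball z e" "affon W F"
      unfolding Fdef by auto
    obtain x where x: "x \<in> W" using W(2) by auto
    obtain c a where ca: "\<forall>y\<in>W. F y = c + a \<bullet> y" using W(4) unfolding affon_def by auto
    have "((\<lambda>y. c + a \<bullet> y) has_derivative (\<lambda>h. a \<bullet> h)) (at x)"
      by (auto intro!: derivative_eq_intros)
    then have "(F has_derivative (\<lambda>h. a \<bullet> h)) (at x)"
      by (rule has_derivative_transform_within_open[OF _ W(1) x]) (simp add: ca)
    then have "F x = 0" by (rule zero)
    moreover have "dist x z < e" using x W(3) by (auto simp: dist_commute)
    ultimately show ?thesis by blast
  qed
  have cl: "closed {x. F x = 0}"
    using contF by (simp add: closed_Collect_eq continuous_on_const)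
  have "F z = 0" for z
  proof -
    have "z \<in> closure {x. F x = 0}" unfolding closure_approachable using dense by blast
    then show ?thesis using cl closure_closed by auto
  qed
  then show "\<exists>c. \<forall>x. F x = c" by blast
qed

end
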